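(* Consider $k\ge 2$ arms. For each arm $j$, $n_j\ge 1$ samples with values in $[0,1]$ have been observed, with sample mean $\overline X_j^{n_j}\in[0,1]$. Let $\alpha$ be an arm with the largest sample mean and $\beta$ an arm with the second largest sample mean, i.e. $\overline X_\alpha^{n_\alpha}\ge \overline X_\beta^{n_\beta}\ge \overline X_j^{n_j}$ for all $j\ne\alpha$. Fix an integer $N\ge 1$ and an arm $i$, and let $Y_1,\dots,Y_N$ be random variables with values in $[0,1]$ (the next $N$ samples of arm $i$). Define the updated sample mean of arm $i$ as $$\overline X_i^{n_i+N}=\frac{n_i\overline X_i^{n_i}+\sum_{t=1}^N Y_t}{n_i+N},$$ while the sample means of all other arms are unchanged. Let $\Lambda_i^b$ be the blinkered intrinsic value of information of testing arm $i$ $N$ times (defined in the context). Then $$\Lambda_\alpha^b\le \frac{N\,\overline X_\beta^{n_\beta}}{n_\alpha}\,\Pr\!\left(\overline X_\alpha^{n_\alpha+N}\le \overline X_\beta^{n_\beta}\right),$$ and for every $i\ne\alpha$, $$\Lambda_i^b\le \frac{N\,(1-\overline X_\alpha^{n_\alpha})}{n_i}\,\Pr\!\left(\overline X_i^{n_i+N}\ge \overline X_\alpha^{n_\alpha}\right).$$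
   Context: Setting: a selection problem among arms, where samples of each arm take values in $[0,1]$ and the estimated value of an arm is its sample mean; after sampling stops, the arm with the greatest sample mean is selected. Currently the selected arm is $\alpha$. For a test consisting of $N$ additional samples of arm $i$, let $m_j'$ denote the sample mean of arm $j$ after the test (so $m_i'=\overline X_i^{n_i+N}$ and $m_j'=\overline X_j^{n_j}$ for $j\ne i$). The blinkered intrinsic value of information is the expected improvement, measured by the updated estimates, of the best arm after the test over the currently selected arm $\alpha$: $$\Lambda_i^b=\mathbb E\!\left[\max_j m_j' - m_\alpha'\right].$$ In particular $\Lambda_\alpha^b=\mathbb E[(\overline X_\beta^{n_\beta}-\overline X_\alpha^{n_\alpha+N})^+]$ and, for $i\ne\alpha$, $\Lambda_i^b=\mathbb E[(\overline X_i^{n_i+N}-\overline X_\alpha^{n_\alpha})^+]$. Probabilities and expectations are over the random future samples $Y_1,\dots,Y_N$. *)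

theory Defs
  imports "HOL-Probability.Probability"
begin

text \<open>Arms are indexed by 0..<k.  n j = number of samples of arm j, xbar j = its sample mean.
  A test of arm i with N further samples y 1, ..., y N gives updated estimates:\<close>
definition upd_mean ::
  "(nat \<Rightarrow> nat) \<Rightarrow> (nat \<Rightarrow> real) \<Rightarrow> nat \<Rightarrow> nat \<Rightarrow> (nat \<Rightarrow> real) \<Rightarrow> nat \<Rightarrow> real" where
  "upd_mean n xbar N i y j =
     (if j = i then (real (n i) * xbar i + (\<Sum>t\<in>{1..N}. y t)) / real (n i + N) else xbar j)"

definition blinkered_voi ::
  "'w measure \<Rightarrow> nat \<Rightarrow> (nat \<Rightarrow> nat) \<Rightarrow> (nat \<Rightarrow> real) \<Rightarrow> nat \<Rightarrow> nat \<Rightarrow> nat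
     \<Rightarrow> (nat \<Rightarrow> 'w \<Rightarrow> real) \<Rightarrow> real" where
  "blinkered_voi M k n xbar alpha N i Y =
     (\<integral>\<omega>. (Max ((\<lambda>j. upd_mean n xbar N i (\<lambda>t. Y t \<omega>) j) ` {..<k})
            - upd_mean n xbar N i (\<lambda>t. Y t \<omega>) alpha) \<partial>M)"

end

theory Submission
  imports Defs
begin

lemma int_bound_helper:
  fixes f :: "'w \<Rightarrow> real"
  assumes P: "prob_space M" and S: "S \<in> sets M" and c: "c \<ge> 0"
    and b: "\<And>\<omega>. \<omega> \<in> space M \<Longrightarrow> f \<omega> \<le> c * indicator S \<omega>"
  shows "integral\<^sup>L M f \<le> c * measure M S"
proof (cases "integrable M f")
  case True
  interpret prob_space M by (rule P)
  have "integral\<^sup>L M f \<le> integral\<^sup>L M (\<lambda>\<omega>. c * indicator S \<omega>)"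
  proof (rule integral_mono)
    have "integrable M (indicator S :: 'w \<Rightarrow> real)"
      using S by (intro integrable_real_indicator) (simp_all add: less_top[symmetric])
    then show "integrable M (\<lambda>\<omega>. c * indicator S \<omega>)" by simp
  qed (use True b in auto)
  also have "\<dots> = c * measure M S" using S sets.sets_into_space[OF S]
    by (simp add: Int_absorb2)
  finally show ?thesis .
next
  case False
  then show ?thesis using c by (simp add: not_integrable_integral_eq)
qed

lemma meas_upd:
  assumes Y_meas: "\<And>t. t \<in> {1..N} \<Longrightarrow> Y t \<in> borel_measurable M"
  shows "(\<lambda>\<omega>. upd_mean n xbar N i (\<lambda>t. Y t \<omega>) i) \<in> borel_measurable M"
proof -
  have "(\<lambda>\<omega>. \<Sum>t\<in>{1..N}. Y t \<omega>) \<in> borel_measurable M"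
    by (rule borel_measurable_sum) (rule Y_meas)
  then show ?thesis unfolding upd_mean_def by simp
qed

theorem mainTheorem1:
  fixes M :: "'w measure" and k N :: nat and n :: "nat \<Rightarrow> nat" and xbar :: "nat \<Rightarrow> real"
    and alpha beta :: nat and Y :: "nat \<Rightarrow> 'w \<Rightarrow> real"
  assumes P: "prob_space M"
    and k2: "k \<ge> 2"
    and n_pos: "\<And>j. j < k \<Longrightarrow> n j \<ge> 1"
    and xbar_range: "\<And>j. j < k \<Longrightarrow> 0 \<le> xbar j \<and> xbar j \<le> 1"
    and alpha: "alpha < k" and beta: "beta < k" and ab: "alpha \<noteq> beta"
    and alpha_best: "xbar alpha \<ge> xbar beta"
    and beta_second: "\<And>j. j < k \<Longrightarrow> j \<noteq> alpha \<Longrightarrow> xbar beta \<ge> xbar j"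
    and N1: "N \<ge> 1"
    and Y_meas: "\<And>t. t \<in> {1..N} \<Longrightarrow> Y t \<in> borel_measurable M"
    and Y_range: "\<And>t \<omega>. t \<in> {1..N} \<Longrightarrow> \<omega> \<in> space M \<Longrightarrow> 0 \<le> Y t \<omega> \<and> Y t \<omega> \<le> 1"
  shows "blinkered_voi M k n xbar alpha N alpha Y
           \<le> real N * xbar beta / real (n alpha) *
             measure M {\<omega> \<in> space M. upd_mean n xbar N alpha (\<lambda>t. Y t \<omega>) alpha \<le> xbar beta}
         \<and> (\<forall>i<k. i \<noteq> alpha \<longrightarrow>
           blinkered_voi M k n xbar alpha N i Y
           \<le> real N * (1 - xbar alpha) / real (n i) *
             measure M {\<omega> \<in> space M. upd_mean n xbar N i (\<lambda>t. Y t \<omega>) i \<ge> xbar alpha})"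
proof
  have fin: "finite {..<k}" and ne: "{..<k} \<noteq> {}" using alpha by auto
  have sum_nn: "\<And>\<omega>. \<omega> \<in> space M \<Longrightarrow> 0 \<le> (\<Sum>t\<in>{1..N}. Y t \<omega>)"
    using Y_range by (intro sum_nonneg) auto
  have sum_le: "\<And>\<omega>. \<omega> \<in> space M \<Longrightarrow> (\<Sum>t\<in>{1..N}. Y t \<omega>) \<le> real N"
  proof -
    fix \<omega> assume "\<omega> \<in> space M"
    then have "(\<Sum>t\<in>{1..N}. Y t \<omega>) \<le> (\<Sum>t\<in>{1..N}. 1)"
      using Y_range by (intro sum_mono) auto
    then show "(\<Sum>t\<in>{1..N}. Y t \<omega>) \<le> real N" by simp
  qed
  let ?S = "{\<omega> \<in> space M. upd_mean n xbar N alpha (\<lambda>t. Y t \<omega>) alpha \<le> xbar beta}"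
  have S1: "?S \<in> sets M" using meas_upd[OF Y_meas, where n=n and xbar=xbar and i=alpha] by measurable
  have na: "real (n alpha) \<ge> 1" using n_pos[OF alpha] by simp
  have xb: "0 \<le> xbar beta" using xbar_range[OF beta] by simp
  show "blinkered_voi M k n xbar alpha N alpha Y
           \<le> real N * xbar beta / real (n alpha) * measure M ?S"
    unfolding blinkered_voi_def
  proof (rule int_bound_helper[OF P S1])
    show "0 \<le> real N * xbar beta / real (n alpha)" using na xb by simp
    fix \<omega> assume w: "\<omega> \<in> space M"
    define m where "m = upd_mean n xbar N alpha (\<lambda>t. Y t \<omega>) alpha"
    have "Max ((\<lambda>j. upd_mean n xbar N alpha (\<lambda>t. Y t \<omega>) j) ` {..<k}) \<le> max m (xbar beta)"
      using fin ne beta_second by (intro Max.boundedI) (auto simp: m_def upd_mean_def le_max_iff_disj)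
    moreover have "m \<ge> real (n alpha) * xbar alpha / real (n alpha + N)"
      unfolding m_def upd_mean_def using sum_nn[OF w]
      by (simp add: divide_right_mono)
    moreover have "real (n alpha) * xbar alpha / real (n alpha + N) \<ge> real (n alpha) * xbar beta / real (n alpha + N)"
      using alpha_best by (intro divide_right_mono mult_left_mono) auto
    moreover have "xbar beta - real (n alpha) * xbar beta / real (n alpha + N) = real N * xbar beta / real (n alpha + N)"
      using na by (simp add: field_simps)
    moreover have "real N * xbar beta / real (n alpha + N) \<le> real N * xbar beta / real (n alpha)"
      using na xb by (intro divide_left_mono) auto
    ultimately show "Max ((\<lambda>j. upd_mean n xbar N alpha (\<lambda>t. Y t \<omega>) j) ` {..<k})
        - upd_mean n xbar N alpha (\<lambda>t. Y t \<omega>) alpha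
        \<le> real N * xbar beta / real (n alpha) * indicator ?S \<omega>"
      using w by (auto simp: m_def[symmetric] indicator_def split: if_splits)
  qed
next
  show "\<forall>i<k. i \<noteq> alpha \<longrightarrow>
           blinkered_voi M k n xbar alpha N i Y
           \<le> real N * (1 - xbar alpha) / real (n i) *
             measure M {\<omega> \<in> space M. upd_mean n xbar N i (\<lambda>t. Y t \<omega>) i \<ge> xbar alpha}"
  proof (intro allI impI)
  have sum_le: "\<And>\<omega>. \<omega> \<in> space M \<Longrightarrow> (\<Sum>t\<in>{1..N}. Y t \<omega>) \<le> real N"
  proof -
    fix \<omega> assume "\<omega> \<in> space M"
    then have "(\<Sum>t\<in>{1..N}. Y t \<omega>) \<le> (\<Sum>t\<in>{1..N}. 1)"
      using Y_range by (intro sum_mono) auto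
    then show "(\<Sum>t\<in>{1..N}. Y t \<omega>) \<le> real N" by simp
  qed
    fix i assume i: "i < k" and ia: "i \<noteq> alpha"
    have fin: "finite {..<k}" and ne: "{..<k} \<noteq> {}" using alpha by auto
    let ?S = "{\<omega> \<in> space M. upd_mean n xbar N i (\<lambda>t. Y t \<omega>) i \<ge> xbar alpha}"
    have S1: "?S \<in> sets M" using meas_upd[OF Y_meas, where n=n and xbar=xbar and i=i] by measurable
    have ni: "real (n i) \<ge> 1" using n_pos[OF i] by simp
    have xa: "xbar alpha \<le> 1" using xbar_range[OF alpha] by simp
    have xi: "xbar i \<le> xbar alpha" using beta_second[OF i ia] alpha_best by simp
    have le_a: "\<And>j. j < k \<Longrightarrow> xbar j \<le> xbar alpha"
      using beta_second alpha_best by (metis order_trans order_refl)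
    show "blinkered_voi M k n xbar alpha N i Y
           \<le> real N * (1 - xbar alpha) / real (n i) * measure M ?S"
      unfolding blinkered_voi_def
    proof (rule int_bound_helper[OF P S1])
      show "0 \<le> real N * (1 - xbar alpha) / real (n i)" using ni xa by simp
      fix \<omega> assume w: "\<omega> \<in> space M"
      define m where "m = upd_mean n xbar N i (\<lambda>t. Y t \<omega>) i"
      have ua: "upd_mean n xbar N i (\<lambda>t. Y t \<omega>) alpha = xbar alpha"
        using ia by (simp add: upd_mean_def)
      have "Max ((\<lambda>j. upd_mean n xbar N i (\<lambda>t. Y t \<omega>) j) ` {..<k}) \<le> max m (xbar alpha)"
        using fin ne le_a by (intro Max.boundedI) (auto simp: m_def upd_mean_def le_max_iff_disj)
      moreover have "m \<le> (real (n i) * xbar i + real N) / real (n i + N)"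
        unfolding m_def upd_mean_def using sum_le[OF w]
        by (simp add: divide_right_mono)
      moreover have "(real (n i) * xbar i + real N) / real (n i + N) \<le> (real (n i) * xbar alpha + real N) / real (n i + N)"
        using xi ni by (intro divide_right_mono) (auto intro: mult_left_mono)
      moreover have "(real (n i) * xbar alpha + real N) / real (n i + N) - xbar alpha = real N * (1 - xbar alpha) / real (n i + N)"
        using ni by (simp add: field_simps)
      moreover have "real N * (1 - xbar alpha) / real (n i + N) \<le> real N * (1 - xbar alpha) / real (n i)"
        using ni xa by (intro divide_left_mono) auto
      ultimately show "Max ((\<lambda>j. upd_mean n xbar N i (\<lambda>t. Y t \<omega>) j) ` {..<k})
          - upd_mean n xbar N i (\<lambda>t. Y t \<omega>) alpha
          \<le> real N * (1 - xbar alpha) / real (n i) * indicator ?S \<omega>"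
        using w by (auto simp: ua m_def[symmetric] indicator_def split: if_splits)
    qed
  qed
qed

end
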